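(* Let $X\in\mathbb{R}^{M\times N_f}$, $W\in\mathbb{R}^{N_f\times N_p}$, and $P_f=(W(XW)^+X)^T$. Then $P_f$ is an (oblique) projector, $P_f^2=P_f$, and for any singular value decomposition $P_f=\sum_{i:\sigma_i>0}\sigma_i\vec{f}_{X,i}\vec{f}_{W,i}^T$ (with $\{\vec{f}_{X,i}\}$ orthonormal, $\{\vec{f}_{W,i}\}$ orthonormal, $\sigma_i>0$) one has $\vec{f}_{W,i}\cdot\vec{f}_{X,j}=\delta_{ij}\cos\theta_i$ with $\cos\theta_i=1/\sigma_i$, so that $$P_f=\sum_i\frac{1}{\cos\theta_i}\vec{f}_{X,i}\vec{f}_{W,i}^T,$$ and all projection deviation angles satisfy $\delta\phi_i=0$.
   Context: $(XW)^+$ is the Moore–Penrose pseudoinverse. The subspace orientation angle $\theta_i\in[0,\pi]$ is defined by $\cos\theta_i=\vec{f}_{X,i}\cdot\vec{f}_{W,i}$. The projection deviation angle $\delta\phi_i$ is defined by $\cos(\pi/2-\delta\phi_i)=\frac{\vec{f}_{W,i}\cdot(\sigma_i\vec{f}_{X,i}-\vec{f}_{W,i})}{\|\sigma_i\vec{f}_{X,i}-\vec{f}_{W,i}\|}$; when $\sigma_i\vec{f}_{X,i}-\vec{f}_{W,i}=0$ (which happens when $\theta_i=0$) it is undefined and by convention taken to be $0$. *)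

theory Defs
  imports "HOL-Analysis.Analysis"
begin

text \<open>Moore--Penrose pseudoinverse, defined by the four Penrose conditions
  (it exists and is unique for every real matrix).\<close>
definition mp_pinv :: "real^'n^'m \<Rightarrow> real^'m^'n" where
  "mp_pinv A = (THE B. A ** B ** A = A \<and> B ** A ** B = B \<and>
                       transpose (A ** B) = A ** B \<and> transpose (B ** A) = B ** A)"

definition outer :: "real^'m \<Rightarrow> real^'n \<Rightarrow> real^'n^'m" where
  "outer u v = (\<chi> a b. u $ a * v $ b)"

definition orient_angle :: "real^'n \<Rightarrow> real^'n \<Rightarrow> real" where
  "orient_angle fX fW = arccos (fX \<bullet> fW)"

text \<open>Projection deviation angle: cos(pi/2 - dphi) = fW.(s fX - fW)/|s fX - fW|,
  with dphi in [-pi/2, pi/2]; taken to be 0 when s fX - fW = 0.\<close>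
definition proj_dev_angle :: "real \<Rightarrow> real^'n \<Rightarrow> real^'n \<Rightarrow> real" where
  "proj_dev_angle s fX fW =
     (if s *\<^sub>R fX - fW = 0 then 0
      else pi / 2 - arccos ((fW \<bullet> (s *\<^sub>R fX - fW)) / norm (s *\<^sub>R fX - fW)))"

end

theory Submission
  imports Defs
begin

lemma adj: fixes A :: "real^'n^'m"
  shows "inner (A *v x) y = inner x (transpose A *v y)"
  by (metis dot_lmul_matrix inner_commute transpose_matrix_vector)

lemma mtm0: fixes N :: "real^'n^'m"
  assumes "transpose N ** N = 0" shows "N = 0"
proof -
  have "\<forall>i. N $ i $ j = 0" for j
  proof -
    have "(transpose N ** N) $ j $ j = (\<Sum>i\<in>UNIV. (N $ i $ j)^2)"
      by (simp add: matrix_matrix_mult_def transpose_def power2_eq_square)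
    then have "(\<Sum>i\<in>UNIV. (N $ i $ j)^2) = 0" using assms by simp
    then show ?thesis by (simp add: sum_nonneg_eq_0_iff)
  qed
  then show ?thesis by (simp add: vec_eq_iff)
qed

lemma zlem: fixes A :: "real^'n^'m" and K :: "real^'k^'m"
  assumes "N = transpose A ** K" "A ** N = 0" shows "N = 0"
proof -
  have "transpose N ** N = transpose K ** (A ** N)"
    using assms(1) by (simp add: matrix_transpose_mul matrix_mul_assoc)
  then show ?thesis using assms(2) mtm0 by simp
qed

lemma colex: fixes A :: "real^'n^'m"
  shows "\<exists>z. transpose A *v (A *v (transpose A *v z)) = transpose A *v w"
proof -
  let ?T = "transpose A"
  obtain y1 y2 where y1: "y1 \<in> span (range ((*v) A))"
    and y2: "\<And>v. v \<in> span (range ((*v) A)) \<Longrightarrow> orthogonal y2 v" and w: "w = y1 + y2"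
    using orthogonal_subspace_decomp_exists by blast
  have sp1: "span (range ((*v) A)) = range ((*v) A)" for A :: "real^'n^'m"
    by (metis span_linear_image matrix_vector_mul_linear span_UNIV)
  have sp2: "span (range ((*v) ?T)) = range ((*v) ?T)"
    by (metis span_linear_image matrix_vector_mul_linear span_UNIV)
  obtain x where x: "y1 = A *v x" using y1 sp1 by blast
  obtain u n where u: "u \<in> span (range ((*v) ?T))"
    and n: "\<And>v. v \<in> span (range ((*v) ?T)) \<Longrightarrow> orthogonal n v" and xun: "x = u + n"
    using orthogonal_subspace_decomp_exists by blast
  obtain z where z: "u = ?T *v z" using u sp2 by blast
  have "orthogonal n (?T *v (A *v n))" using n sp2 by blast
  then have "inner (A *v n) (A *v n) = 0" by (simp add: orthogonal_def adj)
  then have An: "A *v n = 0" by simp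
  have "orthogonal y2 (A *v (?T *v y2))" using y2 sp1 by blast
  then have "inner (?T *v y2) (?T *v y2) = 0"
    by (metis adj inner_commute orthogonal_def)
  then have Ty2: "?T *v y2 = 0" by simp
  have "?T *v (A *v (?T *v z)) = ?T *v (A *v x)"
    using z xun An by (simp add: matrix_vector_right_distrib)
  also have "\<dots> = ?T *v w" using w x Ty2 by (simp add: matrix_vector_right_distrib)
  finally show ?thesis by blast
qed

lemma Cex: fixes A :: "real^'n^'m"
  shows "\<exists>C::real^'m^'m. transpose A ** A ** transpose A ** C = transpose A"
proof -
  let ?T = "transpose A"
  obtain zf where zf: "\<And>w. ?T *v (A *v (?T *v zf w)) = ?T *v w"
    using colex[of A] by metis
  define C :: "real^'m^'m" where "C = (\<chi> k j. zf (axis j 1) $ k)"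
  have "(?T ** A ** ?T ** C) $ i $ j = ?T $ i $ j" for i j
  proof -
    have "(?T ** A ** ?T ** C) $ i $ j = ((?T ** A ** ?T) *v zf (axis j 1)) $ i"
      by (simp add: C_def matrix_matrix_mult_def matrix_vector_mult_def)
    also have "\<dots> = (?T *v axis j 1) $ i"
      using zf by (metis matrix_vector_mul_assoc)
    also have "\<dots> = ?T $ i $ j"
      by (simp add: matrix_vector_mult_def axis_def if_distrib[of "(*) _"] cong: if_cong)
    finally show ?thesis .
  qed
  then show ?thesis by (metis vec_eq_iff)
qed

lemma msub_l: fixes A :: "real^'n^'m" shows "A ** (B - C) = A ** B - A ** C"
  by (simp add: vec_eq_iff matrix_matrix_mult_def sum_subtractf algebra_simps)
lemma msub_r: fixes A :: "real^'n^'m" shows "(A - B) ** C = A ** C - B ** C"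
  by (simp add: vec_eq_iff matrix_matrix_mult_def sum_subtractf algebra_simps)

definition penrose :: "real^'n^'m \<Rightarrow> real^'m^'n \<Rightarrow> bool" where
  "penrose A B \<longleftrightarrow> A ** B ** A = A \<and> B ** A ** B = B \<and>
                       transpose (A ** B) = A ** B \<and> transpose (B ** A) = B ** A"

lemma mp_ex: fixes A :: "real^'n^'m" shows "\<exists>B. penrose A B"
proof -
  let ?T = "transpose A"
  obtain C where C: "?T ** A ** ?T ** C = ?T" using Cex by blast
  define B where "B = ?T ** C"
  have a: "?T ** A ** B = ?T" using C by (simp add: B_def matrix_mul_assoc)
  have "transpose (?T ** A ** B) = A" using a by simp
  then have b: "transpose B ** ?T ** A = A"
    by (simp add: matrix_transpose_mul matrix_mul_assoc)
  have c: "transpose (A ** B) = A ** B"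
  proof -
    have "A ** B = transpose B ** ?T ** A ** B" using b by simp
    also have "\<dots> = transpose B ** ?T" using a by (metis matrix_mul_assoc)
    finally show ?thesis by (simp add: matrix_transpose_mul)
  qed
  have d: "A ** B ** A = A"
  proof -
    have 1: "A ** B ** A - A = transpose ?T ** (B ** A - mat 1)"
      by (simp add: msub_l matrix_mul_assoc)
    have 2: "?T ** (A ** B ** A - A) = 0"
      using a by (simp add: msub_l matrix_mul_assoc)
    show ?thesis using zlem[OF 1 2] by simp
  qed
  have e: "transpose (B ** A) = B ** A"
  proof -
    let ?D = "B ** A"
    have "transpose ?D ** ?D = transpose (C ** A) ** A ** B ** A"
      by (simp add: B_def matrix_transpose_mul matrix_mul_assoc)
    also have "\<dots> = transpose (C ** A) ** A" using d by (metis matrix_mul_assoc)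
    also have "\<dots> = transpose ?D"
      by (simp add: B_def matrix_transpose_mul matrix_mul_assoc)
    finally have "transpose ?D ** ?D = transpose ?D" .
    then have "transpose (transpose ?D ** ?D) = ?D" by simp
    moreover have "transpose (transpose ?D ** ?D) = transpose ?D ** ?D" by (simp add: matrix_transpose_mul)
    ultimately show ?thesis using \<open>transpose ?D ** ?D = transpose ?D\<close> by simp
  qed
  have f: "B ** A ** B = B"
  proof -
    have 1: "B ** A ** B - B = ?T ** (C ** A ** B - C)"
      by (simp add: B_def msub_l matrix_mul_assoc)
    have 2: "A ** (B ** A ** B - B) = 0"
      using d by (simp add: msub_l matrix_mul_assoc)
    show ?thesis using zlem[OF 1 2] by simp
  qed
  show ?thesis using c d e f by (auto simp: penrose_def)
qed

lemma mp_uniq: fixes A :: "real^'n^'m"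
  assumes "penrose A B" "penrose A C" shows "B = C"
proof -
  have B1: "A ** B ** A = A" and B2: "B ** A ** B = B" and B3: "transpose (A ** B) = A ** B"
    and B4: "transpose (B ** A) = B ** A" using assms(1) by (auto simp: penrose_def)
  have C1: "A ** C ** A = A" and C2: "C ** A ** C = C" and C3: "transpose (A ** C) = A ** C"
    and C4: "transpose (C ** A) = C ** A" using assms(2) by (auto simp: penrose_def)
  have "B = B ** transpose (A ** B)" using B2 B3 by (simp add: matrix_mul_assoc)
  also have "\<dots> = B ** transpose B ** transpose A" by (simp add: matrix_transpose_mul matrix_mul_assoc)
  also have "\<dots> = B ** transpose B ** transpose (A ** C ** A)" using C1 by simp
  also have "\<dots> = B ** transpose (A ** B) ** transpose (A ** C)"
    by (simp add: matrix_transpose_mul matrix_mul_assoc)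
  also have "\<dots> = B ** (A ** B ** A) ** C" using B3 C3 by (simp add: matrix_mul_assoc)
  also have "\<dots> = B ** A ** C" using B1 by simp
  finally have 1: "B = B ** A ** C" .
  have "C = transpose (C ** A) ** C" using C2 C4 by (simp add: matrix_mul_assoc)
  also have "\<dots> = transpose A ** transpose C ** C" by (simp add: matrix_transpose_mul matrix_mul_assoc)
  also have "\<dots> = transpose (A ** B ** A) ** transpose C ** C" using B1 by simp
  also have "\<dots> = transpose (B ** A) ** transpose (C ** A) ** C"
    by (simp add: matrix_transpose_mul matrix_mul_assoc)
  also have "\<dots> = B ** (A ** C ** A) ** C" using B4 C4 by (simp add: matrix_mul_assoc)
  also have "\<dots> = B ** A ** C" using C1 by simp
  finally show ?thesis using 1 by simp
qed

lemma mp_pinv_penrose: "penrose A (mp_pinv A)"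
proof -
  have "\<exists>!B. penrose A B" using mp_ex mp_uniq by blast
  then show ?thesis unfolding mp_pinv_def penrose_def[symmetric] by (rule theI')
qed


lemma sum_outer_mv: fixes u w :: "nat \<Rightarrow> real^'f"
  shows "(\<Sum>i<r. c i *\<^sub>R outer (u i) (w i)) *v v = (\<Sum>i<r. (c i * (w i \<bullet> v)) *\<^sub>R u i)"
  by (simp add: vec_eq_iff matrix_vector_mult_def outer_def inner_vec_def sum_distrib_left
      sum_distrib_right sum_component sum.swap[of _ UNIV] mult_ac)

lemma onsum: fixes f :: "nat \<Rightarrow> real^'f"
  assumes "\<And>i j. i < r \<Longrightarrow> j < r \<Longrightarrow> f i \<bullet> f j = (if i = j then 1 else 0)" "k < r"
  shows "f k \<bullet> (\<Sum>i<r. a i *\<^sub>R f i) = a k"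
proof -
  have "f k \<bullet> (\<Sum>i<r. a i *\<^sub>R f i) = (\<Sum>i<r. a i * (if k = i then 1 else 0))"
    by (simp add: inner_sum_right assms(1)[OF assms(2)])
  also have "\<dots> = a k" using assms(2) by (simp add: if_distrib[of "(*) _"] cong: if_cong)
  finally show ?thesis .
qed

lemma onsum2: fixes f g :: "nat \<Rightarrow> real^'f"
  assumes "\<And>i j. i < r \<Longrightarrow> j < r \<Longrightarrow> f i \<bullet> f j = (if i = j then 1 else 0)" "k < r"
  shows "(\<Sum>i<r. (c i * (f i \<bullet> f k)) *\<^sub>R g i) = c k *\<^sub>R g k"
proof -
  have "(\<Sum>i<r. (c i * (f i \<bullet> f k)) *\<^sub>R g i) = (\<Sum>i<r. (if i = k then c k *\<^sub>R g k else 0))"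
    by (rule sum.cong) (auto simp: assms(1)[OF _ assms(2)])
  also have "\<dots> = c k *\<^sub>R g k" using assms(2) by simp
  finally show ?thesis .
qed

theorem theorem5:
  fixes X :: "real^'f^'m" and W :: "real^'p^'f"
    and r :: nat and \<sigma> :: "nat \<Rightarrow> real" and fX fW :: "nat \<Rightarrow> real^'f"
  defines "Pf \<equiv> transpose (W ** mp_pinv (X ** W) ** X)"
  assumes onX: "\<And>i j. i < r \<Longrightarrow> j < r \<Longrightarrow> fX i \<bullet> fX j = (if i = j then 1 else 0)"
    and onW: "\<And>i j. i < r \<Longrightarrow> j < r \<Longrightarrow> fW i \<bullet> fW j = (if i = j then 1 else 0)"
    and pos: "\<And>i. i < r \<Longrightarrow> \<sigma> i > 0"
    and svd: "Pf = (\<Sum>i<r. \<sigma> i *\<^sub>R outer (fX i) (fW i))"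
  shows "Pf ** Pf = Pf
    \<and> (\<forall>i<r. \<forall>j<r. fW i \<bullet> fX j = (if i = j then cos (orient_angle (fX i) (fW i)) else 0))
    \<and> (\<forall>i<r. cos (orient_angle (fX i) (fW i)) = 1 / \<sigma> i)
    \<and> Pf = (\<Sum>i<r. (1 / cos (orient_angle (fX i) (fW i))) *\<^sub>R outer (fX i) (fW i))
    \<and> (\<forall>i<r. proj_dev_angle (\<sigma> i) (fX i) (fW i) = 0)"
proof -
  define B where "B = mp_pinv (X ** W)"
  have BAB: "B ** (X ** W) ** B = B" using mp_pinv_penrose[of "X ** W"] by (simp add: B_def penrose_def)
  have "(W ** B ** X) ** (W ** B ** X) = W ** (B ** (X ** W) ** B) ** X"
    by (simp add: matrix_mul_assoc)
  also have "\<dots> = W ** B ** X" using BAB by simp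
  finally have "(W ** B ** X) ** (W ** B ** X) = W ** B ** X" .
  then have idem: "Pf ** Pf = Pf" unfolding Pf_def B_def[symmetric]
    by (metis matrix_transpose_mul)
  have mv: "\<And>v. Pf *v v = (\<Sum>i<r. (\<sigma> i * (fW i \<bullet> v)) *\<^sub>R fX i)"
    unfolding svd by (rule sum_outer_mv)
  have PW: "Pf *v fW l = \<sigma> l *\<^sub>R fX l" if "l < r" for l
    using mv onsum2[OF onW that, of \<sigma> fX] by simp
  have dot: "fW k \<bullet> fX l = (if k = l then 1 / \<sigma> k else 0)" if kl: "k < r" "l < r" for k l
  proof -
    have "Pf *v (Pf *v fW l) = Pf *v fW l" using idem by (simp add: matrix_vector_mul_assoc)
    then have "(\<Sum>i<r. (\<sigma> i * (\<sigma> l * (fW i \<bullet> fX l))) *\<^sub>R fX i) = \<sigma> l *\<^sub>R fX l"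
      using PW[OF kl(2)] mv by (simp add: matrix_vector_mult_scaleR)
    then have "fX k \<bullet> (\<Sum>i<r. (\<sigma> i * (\<sigma> l * (fW i \<bullet> fX l))) *\<^sub>R fX i) = fX k \<bullet> (\<sigma> l *\<^sub>R fX l)"
      by simp
    then have "\<sigma> k * (\<sigma> l * (fW k \<bullet> fX l)) = \<sigma> l * (if k = l then 1 else 0)"
      using onsum[OF onX kl(1)] onX[OF kl] by simp
    then show ?thesis using pos[OF kl(1)] pos[OF kl(2)] by (auto simp: field_simps)
  qed
  have cosv: "cos (orient_angle (fX i) (fW i)) = 1 / \<sigma> i" if "i < r" for i
  proof -
    have nx: "norm (fX i) = 1" using onX[OF that that] by (simp add: norm_eq_sqrt_inner)
    have nw: "norm (fW i) = 1" using onW[OF that that] by (simp add: norm_eq_sqrt_inner)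
    have "\<bar>fX i \<bullet> fW i\<bar> \<le> 1" using Cauchy_Schwarz_ineq2[of "fX i" "fW i"] nx nw by simp
    then show ?thesis unfolding orient_angle_def using dot[OF that that]
      by (simp add: cos_arccos_abs inner_commute)
  qed
  have part2: "\<forall>i<r. \<forall>j<r. fW i \<bullet> fX j = (if i = j then cos (orient_angle (fX i) (fW i)) else 0)"
    using dot cosv by simp
  have part4: "Pf = (\<Sum>i<r. (1 / cos (orient_angle (fX i) (fW i))) *\<^sub>R outer (fX i) (fW i))"
    unfolding svd by (rule sum.cong) (auto simp: cosv)
  have part5: "proj_dev_angle (\<sigma> i) (fX i) (fW i) = 0" if "i < r" for i
  proof -
    have "fW i \<bullet> (\<sigma> i *\<^sub>R fX i - fW i) = 0"
      using dot[OF that that] onW[OF that that] pos[OF that] by (simp add: inner_diff_right)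
    then show ?thesis by (simp add: proj_dev_angle_def)
  qed
  show ?thesis using idem part2 cosv part4 part5 by blast
qed

end
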